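(* Let $K\subseteq\mathbb{R}^n$ be a proper cone, $b\in\mathbb{R}^n$, and let $A\in\mathbb{R}^{n\times n}$ be $K$-nonnegative and $K$-monotone. Let $A=U-V$ be a $K$-regular splitting and let $U=F-G$ be a $K$-weak regular splitting of type II such that $VF^{-1}G=GF^{-1}V$. Let $s\geq1$ be a fixed number of inner iterations, and set $$T_{s}=(F^{-1}G)^{s}+\sum_{j=0}^{s-1}(F^{-1}G)^{j}F^{-1}V,\qquad P_s^{-1}=\sum_{j=0}^{s-1}(F^{-1}G)^{j}F^{-1}.$$ Let sequences $\{x_k\},\{y_k\}$ be generated by $x_{k+1}=T_sx_k+P_s^{-1}b$ and $y_{k+1}=T_sy_k+P_s^{-1}b$, $k=0,1,2,\ldots$, from initial vectors $x_0,y_0$ satisfying $$x_1\geq_K x_0,\quad y_0\geq_K y_1,\quad y_0\geq_K A^{-1}b\geq_K x_0.$$ Then (i) $y_k\geq_K y_{k+1}\geq_K x_{k+1}\geq_K x_k$ for all $k=0,1,2,\ldots$; (ii) $\lim_{k\to\infty}x_k=A^{-1}b=\lim_{k\to\infty}y_k$ and $y_k\geq_K y_{k+1}\geq_K A^{-1}b\geq_K x_{k+1}\geq_K x_k$ for all $k=0,1,2,\ldots$.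
   Context: A proper cone $K\subseteq\mathbb{R}^n$ is a closed, convex, pointed, solid cone. For $M\in\mathbb{R}^{n\times n}$, $M\geq_K 0$ ($M$ is $K$-nonnegative) means $MK\subseteq K$; for vectors, $x\geq_K y$ means $x-y\in K$. A matrix $A$ is $K$-monotone if $A$ is nonsingular and $A^{-1}\geq_K 0$. A splitting $A=U-V$ (with $U$ nonsingular) is $K$-regular if $U^{-1}\geq_K 0$ and $V\geq_K 0$; it is a $K$-weak regular splitting of type II if $U^{-1}\geq_K 0$ and $VU^{-1}\geq_K 0$. *)

theory Defs
  imports "HOL-Analysis.Analysis"
begin

definition proper_cone :: "(real^'n) set \<Rightarrow> bool" where
  "proper_cone K \<longleftrightarrow> cone K \<and> closed K \<and> convex K \<and>
     K \<inter> uminus ` K = {0} \<and> interior K \<noteq> {}"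

definition K_nonneg :: "(real^'n) set \<Rightarrow> real^'n^'n \<Rightarrow> bool" where
  "K_nonneg K M \<longleftrightarrow> (\<lambda>x. M *v x) ` K \<subseteq> K"

definition K_ge :: "(real^'n) set \<Rightarrow> real^'n \<Rightarrow> real^'n \<Rightarrow> bool" where
  "K_ge K x y \<longleftrightarrow> x - y \<in> K"

definition K_monotone :: "(real^'n) set \<Rightarrow> real^'n^'n \<Rightarrow> bool" where
  "K_monotone K A \<longleftrightarrow> invertible A \<and> K_nonneg K (matrix_inv A)"

definition K_regular_splitting ::
  "(real^'n) set \<Rightarrow> real^'n^'n \<Rightarrow> real^'n^'n \<Rightarrow> real^'n^'n \<Rightarrow> bool" where
  "K_regular_splitting K A U V \<longleftrightarrow> A = U - V \<and> invertible U \<and>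
     K_nonneg K (matrix_inv U) \<and> K_nonneg K V"

definition K_weak_regular_splitting_II ::
  "(real^'n) set \<Rightarrow> real^'n^'n \<Rightarrow> real^'n^'n \<Rightarrow> real^'n^'n \<Rightarrow> bool" where
  "K_weak_regular_splitting_II K A U V \<longleftrightarrow> A = U - V \<and> invertible U \<and>
     K_nonneg K (matrix_inv U) \<and> K_nonneg K (V ** matrix_inv U)"

definition mpow :: "real^'n^'n \<Rightarrow> nat \<Rightarrow> real^'n^'n" where
  "mpow M j = ((\<lambda>X. M ** X) ^^ j) (mat 1)"

end

theory Submission
  imports Defs
begin

lemma minv:
  assumes "invertible (A::real^'n^'n)"
  shows "A ** matrix_inv A = mat 1" "matrix_inv A ** A = mat 1"
proof -
  have "\<exists>A'. A ** A' = mat 1 \<and> A' ** A = mat 1" using assms unfolding invertible_def by blast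
  then have "A ** matrix_inv A = mat 1 \<and> matrix_inv A ** A = mat 1"
    unfolding matrix_inv_def by (rule someI_ex)
  then show "A ** matrix_inv A = mat 1" "matrix_inv A ** A = mat 1" by auto
qed

lemma mm_add_r: "((B::real^'n^'n) + C) ** A = B ** A + C ** A"
  by (vector matrix_matrix_mult_def sum.distrib[symmetric] field_simps)
lemma mm_diff_r: "((B::real^'n^'n) - C) ** A = B ** A - C ** A"
  by (vector matrix_matrix_mult_def sum_subtractf[symmetric] field_simps)
lemma mm_diff_l: "(A::real^'n^'n) ** (B - C) = A ** B - A ** C"
  by (vector matrix_matrix_mult_def sum_subtractf[symmetric] field_simps)

lemma mm_sum_r: "(\<Sum>j\<in>S. (f j::real^'n^'n)) ** (X::real^'n^'n) = (\<Sum>j\<in>S. f j ** X)"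
  by (induction S rule: infinite_finite_induct) (simp_all add: mm_add_r)
lemma mm_sum_l: "(X::real^'n^'n) ** (\<Sum>j\<in>S. f j) = (\<Sum>j\<in>S. X ** f j)"
  by (induction S rule: infinite_finite_induct) (simp_all add: matrix_add_ldistrib)
lemma mv_sum: "(\<Sum>j\<in>S. f j) *v (x::real^'n) = (\<Sum>j\<in>S. f j *v x)"
  by (induction S rule: infinite_finite_induct) (simp_all add: matrix_vector_mult_add_rdistrib)

lemma mpow_0[simp]: "mpow M 0 = mat 1" by (simp add: mpow_def)
lemma mpow_Suc[simp]: "mpow M (Suc j) = M ** mpow M j" by (simp add: mpow_def)
lemma mpow_comm: "mpow M j ** M = M ** mpow M j"
  by (induction j) (simp_all add: matrix_mul_assoc[symmetric])

locale pc =
  fixes K :: "(real^'n) set"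
  assumes pc: "proper_cone K"
begin

lemma closed: "closed K" using pc unfolding proper_cone_def by auto
lemma zero: "0 \<in> K"
proof -
  obtain x where "x \<in> K" using pc unfolding proper_cone_def
    by (metis empty_iff equals0I interior_subset subsetD)
  then show ?thesis using pc unfolding proper_cone_def cone_def by (metis scale_zero_left order_refl)
qed
lemma add: "x \<in> K \<Longrightarrow> y \<in> K \<Longrightarrow> x + y \<in> K"
  using pc unfolding proper_cone_def using convex_cone by blast
lemma scale: "x \<in> K \<Longrightarrow> c \<ge> 0 \<Longrightarrow> c *\<^sub>R x \<in> K"
  using pc unfolding proper_cone_def cone_def by blast
lemma pointed: "x \<in> K \<Longrightarrow> - x \<in> K \<Longrightarrow> x = 0"
proof -
  assume a: "x \<in> K" "- x \<in> K"
  then have "x \<in> uminus ` K" by (metis image_eqI minus_minus)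
  with a show ?thesis using pc unfolding proper_cone_def by blast
qed

lemma nn_mul: "K_nonneg K M \<Longrightarrow> K_nonneg K N \<Longrightarrow> K_nonneg K (M ** N)"
  unfolding K_nonneg_def by (auto simp: matrix_vector_mul_assoc[symmetric])
lemma nn_add: "K_nonneg K M \<Longrightarrow> K_nonneg K N \<Longrightarrow> K_nonneg K (M + N)"
  unfolding K_nonneg_def by (auto simp: matrix_vector_mult_add_rdistrib intro!: add)
lemma nn_id: "K_nonneg K (mat 1)" unfolding K_nonneg_def by auto
lemma nn_zero: "K_nonneg K 0" unfolding K_nonneg_def using zero by auto
lemma nn_sum: "(\<And>j. j \<in> S \<Longrightarrow> K_nonneg K (f j)) \<Longrightarrow> K_nonneg K (\<Sum>j\<in>S. f j)"
  by (induction S rule: infinite_finite_induct) (simp_all add: nn_zero nn_add)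
lemma nn_pow: "K_nonneg K M \<Longrightarrow> K_nonneg K (mpow M j)"
  by (induction j) (simp_all add: nn_id nn_mul)
lemma nn_app: "K_nonneg K M \<Longrightarrow> x \<in> K \<Longrightarrow> M *v x \<in> K"
  unfolding K_nonneg_def by auto

lemma bound: "\<exists>C\<ge>0. \<forall>z w. z \<in> K \<longrightarrow> w - z \<in> K \<longrightarrow> norm z \<le> C * norm w"
proof -
  let ?S = "sphere (0::real^'n) 1 \<inter> K"
  let ?T = "uminus ` K"
  have cS: "compact ?S" using closed by (simp add: compact_Int_closed)
  have cT: "closed ?T" using closed closed_negations by blast
  have dj: "?S \<inter> ?T = {}"
  proof (rule ccontr)
    assume "?S \<inter> ?T \<noteq> {}"
    then obtain u where u: "norm u = 1" "u \<in> K" "- u \<in> K" by auto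
    with u have "u = 0" using pointed by blast
    with u show False by simp
  qed
  obtain d where d: "d > 0" "\<forall>x\<in>?S. \<forall>y\<in>?T. d \<le> dist x y"
    using separate_compact_closed[OF cS cT dj] by blast
  show ?thesis
  proof (intro exI conjI allI impI)
    show "1/d \<ge> 0" using d by simp
    fix z w assume z: "z \<in> K" and wz: "w - z \<in> K"
    show "norm z \<le> (1/d) * norm w"
    proof (cases "z = 0")
      case True then show ?thesis using d by simp
    next
      case False
      let ?n = "norm z"
      have np: "?n > 0" using False by simp
      have "(1/?n) *\<^sub>R z \<in> ?S" using z np scale by (auto simp: norm_scaleR)
      moreover have "- ((1/?n) *\<^sub>R (w - z)) \<in> ?T" using wz np scale by auto
      ultimately have "d \<le> dist ((1/?n) *\<^sub>R z) (- ((1/?n) *\<^sub>R (w - z)))" using d by blast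
      also have "\<dots> = norm ((1/?n) *\<^sub>R w)" by (simp add: dist_norm algebra_simps)
      also have "\<dots> = norm w / ?n" using np by simp
      finally have "d * ?n \<le> norm w" using np by (simp add: field_simps)
      then show ?thesis using d by (simp add: field_simps)
    qed
  qed
qed

lemma mono_conv:
  assumes inc: "\<And>k. z (Suc k) - z k \<in> K" and ub: "\<And>k. c - z k \<in> K"
  shows "\<exists>l. z \<longlonglongrightarrow> l"
proof -
  obtain C where C0: "C \<ge> 0" and C: "\<And>a w. a \<in> K \<Longrightarrow> w - a \<in> K \<Longrightarrow> norm a \<le> C * norm w" using bound by blast
  have step: "z m - z k \<in> K" if "k \<le> m" for k m
    using that
  proof (induction m)
    case 0 then show ?case using zero by simp
  next
    case (Suc m)
    show ?case
    proof (cases "k = Suc m")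
      case True then show ?thesis using zero by simp
    next
      case False
      then have "z m - z k \<in> K" using Suc by simp
      then have "(z (Suc m) - z m) + (z m - z k) \<in> K" using inc add by blast
      then show ?thesis by simp
    qed
  qed
  have "norm (z k - z 0) \<le> C * norm (c - z 0)" for k
    using C[of "z k - z 0" "c - z 0"] step[of 0 k] ub[of k] by simp
  then have "norm (z k) \<le> C * norm (c - z 0) + norm (z 0)" for k
    by (smt (verit) norm_triangle_ineq2)
  then have "bounded (range z)" unfolding bounded_iff by blast
  then obtain l r where r: "strict_mono r" "(z \<circ> r) \<longlonglongrightarrow> l"
    using bounded_imp_convergent_subsequence by blast
  have lk: "l - z k \<in> K" for k
  proof (rule Lim_in_closed_set[OF closed _ _ tendsto_diff[OF r(2) tendsto_const]])
    show "\<forall>\<^sub>F n in sequentially. (z \<circ> r) n - z k \<in> K"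
      unfolding eventually_sequentially using step r(1)
      by (metis comp_apply le_trans seq_suble)
  qed simp
  show ?thesis
  proof (rule exI, rule LIMSEQ_I)
    fix e :: real assume e: "e > 0"
    have "(z \<circ> r) \<longlonglongrightarrow> l" by (fact r(2))
    then obtain N where N: "\<And>n. n \<ge> N \<Longrightarrow> norm ((z \<circ> r) n - l) < e / (C + 1)"
      using LIMSEQ_D[of "z \<circ> r" l "e/(C+1)"] e C0 by auto
    show "\<exists>M. \<forall>k\<ge>M. norm (z k - l) < e"
    proof (intro exI allI impI)
      fix k assume k: "r N \<le> k"
      have a: "z k - z (r N) \<in> K" using step k by blast
      have b: "(l - z (r N)) - (z k - z (r N)) \<in> K" using lk[of k] by simp
      have "norm (z k - z (r N)) \<le> C * norm (l - z (r N))" using C[OF a b] .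
      moreover have w: "norm (l - z (r N)) < e / (C + 1)" using N[of N] by (simp add: norm_minus_commute)
      moreover have "norm (z k - l) \<le> norm (z k - z (r N)) + norm (l - z (r N))"
        by (metis diff_diff_eq2 diff_add_cancel norm_triangle_ineq4 add.commute)
      ultimately have "norm (z k - l) \<le> (C + 1) * norm (l - z (r N))" by (simp add: algebra_simps)
      also have "\<dots> < (C + 1) * (e / (C + 1))" using w C0 by (intro mult_strict_left_mono) auto
      also have "\<dots> = e" using C0 by simp
      finally show "norm (z k - l) < e" .
    qed
  qed
qed

end


lemma canc: "(l::'a::ab_group_add) = l - a + c \<Longrightarrow> a = c"
  by (simp add: algebra_simps)

theorem theorem4p1:
  fixes K :: "(real^'n) set" and A U V F G :: "real^'n^'n" and b :: "real^'n"
    and s :: nat and x y :: "nat \<Rightarrow> real^'n"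
  assumes K: "proper_cone K"
    and A_nonneg: "K_nonneg K A" and A_mono: "K_monotone K A"
    and reg: "K_regular_splitting K A U V"
    and weak: "K_weak_regular_splitting_II K U F G"
    and comm: "V ** matrix_inv F ** G = G ** matrix_inv F ** V"
    and s: "s \<ge> 1"
    and x_rec: "\<And>k. x (Suc k) =
       (mpow (matrix_inv F ** G) s + (\<Sum>j<s. mpow (matrix_inv F ** G) j ** matrix_inv F ** V)) *v x k
       + (\<Sum>j<s. mpow (matrix_inv F ** G) j ** matrix_inv F) *v b"
    and y_rec: "\<And>k. y (Suc k) =
       (mpow (matrix_inv F ** G) s + (\<Sum>j<s. mpow (matrix_inv F ** G) j ** matrix_inv F ** V)) *v y k
       + (\<Sum>j<s. mpow (matrix_inv F ** G) j ** matrix_inv F) *v b"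
    and x0: "K_ge K (x 1) (x 0)" and y0: "K_ge K (y 0) (y 1)"
    and y0A: "K_ge K (y 0) (matrix_inv A *v b)" and Ax0: "K_ge K (matrix_inv A *v b) (x 0)"
  shows "(\<forall>k. K_ge K (y k) (y (Suc k)) \<and> K_ge K (y (Suc k)) (x (Suc k)) \<and> K_ge K (x (Suc k)) (x k))
    \<and> (x \<longlonglongrightarrow> matrix_inv A *v b) \<and> (y \<longlonglongrightarrow> matrix_inv A *v b)
    \<and> (\<forall>k. K_ge K (y k) (y (Suc k)) \<and> K_ge K (y (Suc k)) (matrix_inv A *v b)
          \<and> K_ge K (matrix_inv A *v b) (x (Suc k)) \<and> K_ge K (x (Suc k)) (x k))"
proof -
  interpret pc K by (rule pc.intro[OF K])
  define Fi where "Fi = matrix_inv F"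
  define H where "H = Fi ** G"
  define W where "W = G ** Fi"
  define Ai where "Ai = matrix_inv A"
  define T where "T = mpow H s + (\<Sum>j<s. mpow H j ** Fi ** V)"
  define Pm where "Pm = (\<Sum>j<s. mpow H j ** Fi)"
  define xs where "xs = Ai *v b"
  have FFi: "F ** Fi = mat 1" "Fi ** F = mat 1"
    using minv[of F] weak unfolding Fi_def K_weak_regular_splitting_II_def by auto
  have AAi: "A ** Ai = mat 1" "Ai ** A = mat 1"
    using minv[of A] A_mono unfolding Ai_def K_monotone_def by auto
  have Ai_nn: "K_nonneg K Ai" using A_mono unfolding Ai_def K_monotone_def by auto
  have Fi_nn: "K_nonneg K Fi" and W_nn: "K_nonneg K W" and UFG: "U = F - G"
    using weak unfolding Fi_def W_def K_weak_regular_splitting_II_def by auto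
  have V_nn: "K_nonneg K V" and AUV: "A = U - V" using reg unfolding K_regular_splitting_def by auto
  have HFi: "mpow H j ** Fi = Fi ** mpow W j" for j
  proof (induction j)
    case 0 then show ?case by simp
  next
    case (Suc j)
    have "mpow H (Suc j) ** Fi = H ** (mpow H j ** Fi)" by (simp add: matrix_mul_assoc)
    also have "\<dots> = H ** (Fi ** mpow W j)" using Suc by simp
    also have "\<dots> = Fi ** (W ** mpow W j)" unfolding H_def W_def by (simp add: matrix_mul_assoc)
    finally show ?case by simp
  qed
  have Pm_eq: "Pm = Fi ** (\<Sum>j<s. mpow W j)"
    unfolding Pm_def mm_sum_l by (simp add: HFi)
  have Pm_nn: "K_nonneg K Pm" unfolding Pm_eq
    by (intro nn_mul Fi_nn nn_sum nn_pow W_nn)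
  have T_eq1: "T = mpow H s + Pm ** V" unfolding T_def Pm_def mm_sum_r by simp
  have PU: "Pm ** U = mat 1 - mpow H s"
  proof -
    have "mpow H j ** Fi ** U = mpow H j - mpow H (Suc j)" for j
    proof -
      have "mpow H j ** Fi ** U = mpow H j ** (Fi ** F - Fi ** G)"
        unfolding UFG by (simp add: mm_diff_l matrix_mul_assoc)
      also have "\<dots> = mpow H j - mpow H j ** H" unfolding FFi H_def by (simp add: mm_diff_l)
      finally show ?thesis by (simp add: mpow_comm)
    qed
    then have "Pm ** U = (\<Sum>j<s. mpow H j - mpow H (Suc j))" unfolding Pm_def mm_sum_r by simp
    also have "\<dots> = mat 1 - mpow H s" using sum_lessThan_telescope'[of "mpow H" s] by simp
    finally show ?thesis .
  qed
  have T_eq: "T = mat 1 - Pm ** A"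
    unfolding T_eq1 AUV mm_diff_l PU by simp
  have UP: "U ** Pm = mat 1 - mpow W s"
  proof -
    have "U ** Pm = (mat 1 - W) ** (\<Sum>j<s. mpow W j)"
      unfolding Pm_eq UFG W_def by (simp add: matrix_mul_assoc mm_diff_r FFi)
    also have "\<dots> = (\<Sum>j<s. mpow W j - mpow W (Suc j))"
      unfolding mm_sum_l by (simp add: mm_diff_r)
    also have "\<dots> = mat 1 - mpow W s" using sum_lessThan_telescope'[of "mpow W" s] by simp
    finally show ?thesis .
  qed
  have AP: "mat 1 - A ** Pm = mpow W s + V ** Pm"
    unfolding AUV mm_diff_r UP by simp
  have aux: "A ** Pm ** A ** Ai = A ** Pm" by (metis matrix_mul_assoc AAi(1) matrix_mul_rid)
  have conj: "A ** T ** Ai = mat 1 - A ** Pm"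
    unfolding T_eq mm_diff_l mm_diff_r by (simp add: matrix_mul_assoc AAi aux)
  have "T = Ai ** (A ** T ** Ai) ** A"
    by (simp add: matrix_mul_assoc AAi)
       (simp add: matrix_mul_assoc[symmetric] AAi)
  then have T_nn: "K_nonneg K T"
    unfolding conj AP by (metis nn_mul nn_add Ai_nn A_nonneg nn_pow W_nn V_nn Pm_nn)
  have xr: "x (Suc k) = T *v x k + Pm *v b" for k using x_rec[of k] unfolding T_def Pm_def H_def Fi_def .
  have yr: "y (Suc k) = T *v y k + Pm *v b" for k using y_rec[of k] unfolding T_def Pm_def H_def Fi_def .
  have Axs: "A *v xs = b" unfolding xs_def by (simp add: matrix_vector_mul_assoc AAi)
  have fixp: "xs = T *v xs + Pm *v b"
    unfolding T_eq by (simp add: matrix_vector_mult_diff_rdistrib matrix_vector_mul_assoc[symmetric] Axs)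
  have fixp2: "T *v xs = xs - Pm *v b" using fixp by (metis add_diff_cancel_right')
  have xinc: "x (Suc k) - x k \<in> K" for k
  proof (induction k)
    case 0 then show ?case using x0 unfolding K_ge_def by simp
  next
    case (Suc k)
    have "x (Suc (Suc k)) - x (Suc k) = T *v (x (Suc k) - x k)"
      using xr[of "Suc k"] xr[of k] by (simp add: matrix_vector_mult_diff_distrib)
    then show ?case using nn_app[OF T_nn Suc] by simp
  qed
  have ydec: "y k - y (Suc k) \<in> K" for k
  proof (induction k)
    case 0 then show ?case using y0 unfolding K_ge_def by simp
  next
    case (Suc k)
    have "y (Suc k) - y (Suc (Suc k)) = T *v (y k - y (Suc k))"
      using yr[of "Suc k"] yr[of k] by (simp add: matrix_vector_mult_diff_distrib)
    then show ?case using nn_app[OF T_nn Suc] by simp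
  qed
  have xub: "xs - x k \<in> K" for k
  proof (induction k)
    case 0 then show ?case using Ax0 unfolding K_ge_def xs_def Ai_def by simp
  next
    case (Suc k)
    have "xs - x (Suc k) = T *v (xs - x k)"
      using xr[of k] by (simp add: matrix_vector_mult_diff_distrib fixp2)
    then show ?case using nn_app[OF T_nn Suc] by simp
  qed
  have ylb: "y k - xs \<in> K" for k
  proof (induction k)
    case 0 then show ?case using y0A unfolding K_ge_def xs_def Ai_def by simp
  next
    case (Suc k)
    have "y (Suc k) - xs = T *v (y k - xs)"
      using yr[of k] by (simp add: matrix_vector_mult_diff_distrib fixp2)
    then show ?case using nn_app[OF T_nn Suc] by simp
  qed
  have uniq: "d = 0" if d: "d \<in> K" and P0: "Pm *v (A *v d) = 0" for d
  proof -
    define q where "q = A *v d"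
    have q: "q \<in> K" unfolding q_def using nn_app[OF A_nonneg d] .
    have "Fi *v ((\<Sum>j<s. mpow W j) *v q) = 0" using P0
      unfolding Pm_eq q_def by (simp add: matrix_vector_mul_assoc matrix_mul_assoc)
    then have "F *v (Fi *v ((\<Sum>j<s. mpow W j) *v q)) = 0" by simp
    then have S0: "(\<Sum>j<s. mpow W j) *v q = 0" by (metis matrix_vector_mul_assoc FFi(1) matrix_vector_mul_lid)
    obtain s' where s': "s = Suc s'" using s by (cases s) auto
    have "(\<Sum>j<s. mpow W j) *v q = q + (\<Sum>j<s'. mpow W (Suc j) *v q)"
      unfolding s' sum.lessThan_Suc_shift by (simp only: matrix_vector_mult_add_rdistrib mv_sum mpow_0 matrix_vector_mul_lid)
    moreover have "(\<Sum>j<s'. mpow W (Suc j) *v q) \<in> K"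
    proof -
      have "K_nonneg K (\<Sum>j<s'. mpow W (Suc j))" by (intro nn_sum nn_pow W_nn)
      from nn_app[OF this q] show ?thesis unfolding mv_sum .
    qed
    ultimately have "- q \<in> K" using S0 by (metis add.commute eq_neg_iff_add_eq_0)
    then have "q = 0" using pointed q by blast
    then have "Ai *v (A *v d) = 0" unfolding q_def by simp
    then show "d = 0" by (simp add: matrix_vector_mul_assoc AAi)
  qed
  have limfix: "l = T *v l + Pm *v b" if "z \<longlonglongrightarrow> l" "\<And>k. z (Suc k) = T *v z k + Pm *v b" for z l
  proof -
    have "(\<lambda>k. z (Suc k)) \<longlonglongrightarrow> l" using that(1) by (rule LIMSEQ_Suc)
    moreover have "(\<lambda>k. T *v z k + Pm *v b) \<longlonglongrightarrow> T *v l + Pm *v b"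
      by (rule tendsto_add[OF bounded_linear.tendsto[OF matrix_vector_mul_bounded_linear that(1)] tendsto_const])
    moreover have "(\<lambda>k. z (Suc k)) \<longlonglongrightarrow> T *v l + Pm *v b" using calculation(2) by (simp add: that(2))
    ultimately show ?thesis using LIMSEQ_unique by blast
  qed
  have PA0: "Pm *v (A *v (l - xs)) = 0" if "l = T *v l + Pm *v b" for l
  proof -
    have e1: "T *v l = l - Pm *v (A *v l)" unfolding T_eq
      by (simp add: matrix_vector_mult_diff_rdistrib matrix_vector_mul_assoc)
    have "l = l - Pm *v (A *v l) + Pm *v b" using that by (simp only: e1)
    then have "Pm *v (A *v l) = Pm *v b" by (rule canc)
    then show ?thesis by (simp add: matrix_vector_mult_diff_distrib Axs)
  qed
  obtain xl where xl: "x \<longlonglongrightarrow> xl" using mono_conv[of x xs, OF xinc xub] by blast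
  have "xs - xl \<in> K"
    by (rule Lim_in_closed_set[OF closed _ _ tendsto_diff[OF tendsto_const xl]]) (use xub in auto)
  moreover have "Pm *v (A *v (xs - xl)) = 0"
    using PA0[OF limfix[OF xl xr]] by (simp add: matrix_vector_mult_diff_distrib)
  ultimately have "xs - xl = 0" using uniq by blast
  then have xlim: "x \<longlonglongrightarrow> xs" using xl by simp
  obtain yl' where yl': "(\<lambda>k. - y k) \<longlonglongrightarrow> yl'"
  proof -
    have a: "- y (Suc k) - - y k \<in> K" for k using ydec[of k] by (simp add: diff_minus_eq_add)
    have b: "- xs - - y k \<in> K" for k using ylb[of k] by (simp add: diff_minus_eq_add)
    show ?thesis using mono_conv[of "\<lambda>k. - y k" "- xs", OF a b] that by blast
  qed
  then have yl: "y \<longlonglongrightarrow> - yl'" using tendsto_minus[OF yl'] by simp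
  have "- yl' - xs \<in> K"
    by (rule Lim_in_closed_set[OF closed _ _ tendsto_diff[OF yl tendsto_const]]) (use ylb in auto)
  moreover have "Pm *v (A *v (- yl' - xs)) = 0"
    using PA0[OF limfix[OF yl yr]] .
  ultimately have "- yl' - xs = 0" using uniq by blast
  then have ylim: "y \<longlonglongrightarrow> xs" using yl by simp
  have yx: "y (Suc k) - x (Suc k) \<in> K" for k
    using add[OF ylb[of "Suc k"] xub[of "Suc k"]] by simp
  have xs_eq: "xs = matrix_inv A *v b" unfolding xs_def Ai_def ..
  show ?thesis
    unfolding K_ge_def xs_eq[symmetric] using xinc ydec xub ylb yx xlim ylim by blast
qed

end
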